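(* Let $f\colon\underline I=I_1\times\cdots\times I_n\to\mathbb R$ be a convex and separately increasing function ($I_i$ intervals), and let $H$ be a finite-dimensional Hilbert space. Let $\underline x=(x_1,\dots,x_n)$ and $\underline y=(y_1,\dots,y_n)$ be abelian $n$-tuples of self-adjoint operators on $H$ with $\sigma(x_i),\sigma(y_i)\subseteq I_i$ for all $i$. If $x_i\le y_i$ for $i=1,\dots,n$, then $f(\underline x)\prec_w f(\underline y)$.
   Context: Separately increasing means increasing in each variable when the others are held fixed. An $n$-tuple is abelian if its entries commute; $f$ of an abelian tuple of self-adjoint operators is defined by joint functional calculus. For a self-adjoint operator $x$ on an $m$-dimensional Hilbert space, $x_{[1]}\ge\cdots\ge x_{[m]}$ are its eigenvalues counted with multiplicity in decreasing order, and $x\prec_w y$ means $\sum_{i=1}^k x_{[i]}\le\sum_{i=1}^k y_{[i]}$ for $k=1,\dots,m$. *)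

theory Defs
  imports "HOL-Analysis.Analysis" "Jordan_Normal_Form.Schur_Decomposition"
    "Jordan_Normal_Form.Spectral_Radius"
begin

text \<open>Operators on an m-dimensional complex Hilbert space are represented as m x m
complex matrices (H = C^m with its standard inner product).\<close>

definition self_adjoint :: "nat \<Rightarrow> complex mat \<Rightarrow> bool" where
  "self_adjoint m A \<longleftrightarrow> A \<in> carrier_mat m m \<and> mat_adjoint A = A"

definition unitary_mat :: "nat \<Rightarrow> complex mat \<Rightarrow> bool" where
  "unitary_mat m U \<longleftrightarrow> U \<in> carrier_mat m m \<and> U * mat_adjoint U = 1\<^sub>m m
      \<and> mat_adjoint U * U = 1\<^sub>m m"

definition loewner_le :: "nat \<Rightarrow> complex mat \<Rightarrow> complex mat \<Rightarrow> bool" where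
  "loewner_le m A B \<longleftrightarrow>
     (\<forall>v \<in> carrier_vec m. Re (conjugate v \<bullet> ((B - A) *\<^sub>v v)) \<ge> 0)"

definition abelian_tuple :: "('n \<Rightarrow> complex mat) \<Rightarrow> bool" where
  "abelian_tuple x \<longleftrightarrow> (\<forall>i j. x i * x j = x j * x i)"

definition real_diag_mat :: "nat \<Rightarrow> (nat \<Rightarrow> real) \<Rightarrow> complex mat" where
  "real_diag_mat m d = mat m m (\<lambda>(r, c). if r = c then complex_of_real (d r) else 0)"

text \<open>Joint functional calculus: if U simultaneously diagonalises the abelian tuple x,
  x_i = U diag(\<Lambda>_1 $ i, ..., \<Lambda>_m $ i) U^*, then
  f(x) = U diag(f(\<Lambda>_1), ..., f(\<Lambda>_m)) U^*.\<close>
definition joint_fc_rel :: "nat \<Rightarrow> (real ^ 'n \<Rightarrow> real) \<Rightarrow> ('n \<Rightarrow> complex mat) \<Rightarrow> complex mat \<Rightarrow> bool" where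
  "joint_fc_rel m f x z \<longleftrightarrow>
     (\<exists>U (\<Lambda> :: nat \<Rightarrow> real ^ 'n). unitary_mat m U \<and>
        (\<forall>i. x i = U * real_diag_mat m (\<lambda>k. \<Lambda> k $ i) * mat_adjoint U) \<and>
        z = U * real_diag_mat m (\<lambda>k. f (\<Lambda> k)) * mat_adjoint U)"

definition joint_fc :: "nat \<Rightarrow> (real ^ 'n \<Rightarrow> real) \<Rightarrow> ('n \<Rightarrow> complex mat) \<Rightarrow> complex mat" where
  "joint_fc m f x = (THE z. joint_fc_rel m f x z)"

definition eigs_desc :: "complex mat \<Rightarrow> real list" where
  "eigs_desc A = rev (sorted_list_of_multiset (image_mset Re (proots (char_poly A))))"

definition weak_majorized :: "nat \<Rightarrow> complex mat \<Rightarrow> complex mat \<Rightarrow> bool" where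
  "weak_majorized m A B \<longleftrightarrow>
     (\<forall>k \<in> {1..m}. (\<Sum>i<k. eigs_desc A ! i) \<le> (\<Sum>i<k. eigs_desc B ! i))"

definition sep_increasing_on :: "(real ^ 'n) set \<Rightarrow> (real ^ 'n \<Rightarrow> real) \<Rightarrow> bool" where
  "sep_increasing_on D f \<longleftrightarrow>
     (\<forall>v \<in> D. \<forall>w \<in> D. \<forall>i. (\<forall>j. j \<noteq> i \<longrightarrow> v $ j = w $ j) \<and> v $ i \<le> w $ i \<longrightarrow> f v \<le> f w)"

end

theory Submission
  imports Defs
begin


lemma mult_entry: assumes "A \<in> carrier_mat n k" "B \<in> carrier_mat k m" "i < n" "j < m"
  shows "(A * B) $$ (i,j) = (\<Sum>c<k. A $$ (i,c) * B $$ (c,j))"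
proof -
  have "(A*B)$$(i,j) = row A i \<bullet> col B j" using assms by simp
  also have "\<dots> = (\<Sum>c<k. A $$ (i,c) * B $$ (c,j))"
    unfolding scalar_prod_def using assms by (auto simp: atLeast0LessThan intro!: sum.cong)
  finally show ?thesis .
qed

lemma mult_vec_entry: assumes "A \<in> carrier_mat n k" "v \<in> carrier_vec k" "i < n"
  shows "(A *\<^sub>v v) $ i = (\<Sum>c<k. A $$ (i,c) * v $ c)"
proof -
  have "(A *\<^sub>v v) $ i = row A i \<bullet> v" using assms by simp
  also have "\<dots> = (\<Sum>c<k. A $$ (i,c) * v $ c)"
    unfolding scalar_prod_def using assms by (auto simp: atLeast0LessThan intro!: sum.cong)
  finally show ?thesis .
qed

lemma adj_dims[simp]: "dim_row (mat_adjoint A) = dim_col A" "dim_col (mat_adjoint A) = dim_row A"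
  by (auto simp: mat_adjoint_def)

lemma adj_carrier[simp,intro]: "A \<in> carrier_mat n m \<Longrightarrow> mat_adjoint A \<in> carrier_mat m n"
  unfolding carrier_mat_def by simp

lemma adj_index[simp]: "i < dim_col A \<Longrightarrow> j < dim_row A \<Longrightarrow> mat_adjoint A $$ (i,j) = cnj (A $$ (j,i))"
proof -
  assume a: "i < dim_col A" "j < dim_row A"
  have "mat_adjoint A $$ (i,j) = map conjugate (cols A) ! i $ j"
    unfolding mat_adjoint_def using a by (intro mat_of_rows_index) auto
  also have "\<dots> = conjugate (col A i) $ j" using a by simp
  also have "\<dots> = cnj (A $$ (j,i))" using a by (simp add: conjugate_complex_def)
  finally show ?thesis .
qed

lemma adj_adj[simp]: "mat_adjoint (mat_adjoint (A::complex mat)) = A"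
  by (rule eq_matI) simp_all

lemma adj_mult: assumes A: "(A::complex mat) \<in> carrier_mat n k" and B: "B \<in> carrier_mat k m"
  shows "mat_adjoint (A * B) = mat_adjoint B * mat_adjoint A"
proof (rule eq_matI)
  fix i j assume ij: "i < dim_row (mat_adjoint B * mat_adjoint A)" "j < dim_col (mat_adjoint B * mat_adjoint A)"
  hence i: "i < m" and j: "j < n" using A B by auto
  have "mat_adjoint (A * B) $$ (i,j) = cnj ((A*B) $$ (j,i))" using i j A B by simp
  also have "\<dots> = cnj (\<Sum>c<k. A $$ (j,c) * B $$ (c,i))" using mult_entry[OF A B j i] by simp
  also have "\<dots> = (\<Sum>c<k. mat_adjoint B $$ (i,c) * mat_adjoint A $$ (c,j))"
    unfolding cnj_sum using A B i j by (intro sum.cong) (auto simp: mult.commute)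
  also have "\<dots> = (mat_adjoint B * mat_adjoint A) $$ (i,j)"
    using mult_entry[OF adj_carrier[OF B] adj_carrier[OF A] i j] by simp
  finally show "mat_adjoint (A * B) $$ (i,j) = (mat_adjoint B * mat_adjoint A) $$ (i,j)" .
qed (use A B in auto)

lemma unitaryD: assumes "unitary_mat m U"
  shows "U \<in> carrier_mat m m" "mat_adjoint U \<in> carrier_mat m m" "U * mat_adjoint U = 1\<^sub>m m" "mat_adjoint U * U = 1\<^sub>m m"
  using assms unfolding unitary_mat_def by auto

lemma unitary_cancel1: assumes U: "unitary_mat m U" and B: "B \<in> carrier_mat m k"
  shows "U * (mat_adjoint U * B) = B"
proof -
  note u = unitaryD[OF U]
  have "U * (mat_adjoint U * B) = (U * mat_adjoint U) * B"
    using assoc_mult_mat[OF u(1) u(2) B] by (rule sym)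
  also have "\<dots> = B" using u B by simp
  finally show ?thesis .
qed

lemma unitary_cancel2: assumes U: "unitary_mat m U" and B: "B \<in> carrier_mat m k"
  shows "mat_adjoint U * (U * B) = B"
proof -
  note u = unitaryD[OF U]
  have "mat_adjoint U * (U * B) = (mat_adjoint U * U) * B"
    using assoc_mult_mat[OF u(2) u(1) B] by (rule sym)
  also have "\<dots> = B" using u B by simp
  finally show ?thesis .
qed

lemma unitary_prod: assumes V: "unitary_mat m V" and U: "unitary_mat m U"
  shows "unitary_mat m (mat_adjoint V * U)"
proof -
  note v = unitaryD[OF V] and u = unitaryD[OF U]
  have c: "mat_adjoint V * U \<in> carrier_mat m m" using v u by auto
  have a: "mat_adjoint (mat_adjoint V * U) = mat_adjoint U * V"
    using adj_mult[OF v(2) u(1)] by simp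
  have 1: "mat_adjoint U * V * (mat_adjoint V * U) = 1\<^sub>m m"
    using assoc_mult_mat[OF u(2) v(1) c] v u unitary_cancel1[OF V u(1)] by simp
  have 2: "mat_adjoint V * U * (mat_adjoint U * V) = 1\<^sub>m m"
    using assoc_mult_mat[OF v(2) u(1) mult_carrier_mat[OF u(2) v(1)]] v u unitary_cancel1[OF U v(1)] by simp
  show ?thesis unfolding unitary_mat_def a using c 1 2 by simp
qed

lemma rdiag_carrier[simp]: "real_diag_mat m d \<in> carrier_mat m m"
  and rdiag_dims[simp]: "dim_row (real_diag_mat m d) = m" "dim_col (real_diag_mat m d) = m"
  by (auto simp: real_diag_mat_def)

lemma rdiag_index[simp]: "i < m \<Longrightarrow> j < m \<Longrightarrow> real_diag_mat m d $$ (i,j) = (if i = j then complex_of_real (d i) else 0)"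
  by (simp add: real_diag_mat_def)

lemma mult_rdiag_right: assumes A: "A \<in> carrier_mat n m" and i: "i < n" and j: "j < m"
  shows "(A * real_diag_mat m d) $$ (i,j) = A $$ (i,j) * complex_of_real (d j)"
proof -
  have "(A * real_diag_mat m d) $$ (i,j) = (\<Sum>c<m. A $$ (i,c) * real_diag_mat m d $$ (c,j))"
    using mult_entry[OF A rdiag_carrier i j] .
  also have "\<dots> = (\<Sum>c<m. if c = j then A $$ (i,j) * complex_of_real (d j) else 0)"
    using j by (intro sum.cong) auto
  also have "\<dots> = A $$ (i,j) * complex_of_real (d j)" using j by simp
  finally show ?thesis .
qed

lemma mult_rdiag_left: assumes A: "A \<in> carrier_mat m n" and i: "i < m" and j: "j < n"
  shows "(real_diag_mat m d * A) $$ (i,j) = complex_of_real (d i) * A $$ (i,j)"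
proof -
  have "(real_diag_mat m d * A) $$ (i,j) = (\<Sum>c<m. real_diag_mat m d $$ (i,c) * A $$ (c,j))"
    using mult_entry[OF rdiag_carrier A i j] .
  also have "\<dots> = (\<Sum>c<m. if c = i then complex_of_real (d i) * A $$ (i,j) else 0)"
    using i by (intro sum.cong) auto
  also have "\<dots> = complex_of_real (d i) * A $$ (i,j)" using i by simp
  finally show ?thesis .
qed



lemma Q1: assumes A: "(A::complex mat) \<in> carrier_mat m m" and U: "U \<in> carrier_mat m m" and k: "k < m"
  shows "conjugate (col U k) \<bullet> (A *\<^sub>v col U k) = (mat_adjoint U * A * U) $$ (k,k)"
proof -
  have "(mat_adjoint U * A * U) $$ (k,k) = (mat_adjoint U * (A * U)) $$ (k,k)"
    using assoc_mult_mat[OF adj_carrier[OF U] A U] by simp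
  also have "\<dots> = (\<Sum>c<m. mat_adjoint U $$ (k,c) * (A * U) $$ (c,k))"
    using mult_entry[OF adj_carrier[OF U] mult_carrier_mat[OF A U] k k] .
  also have "\<dots> = (\<Sum>c<m. conjugate (col U k) $ c * (A *\<^sub>v col U k) $ c)"
    using A U k by (intro sum.cong) (auto simp: conjugate_complex_def)
  also have "\<dots> = conjugate (col U k) \<bullet> (A *\<^sub>v col U k)"
    unfolding scalar_prod_def using A U by (simp add: atLeast0LessThan)
  finally show ?thesis by simp
qed

lemma Q2: assumes W: "W \<in> carrier_mat m m" and k: "k < m"
  shows "(mat_adjoint W * real_diag_mat m g * W) $$ (k,k) = complex_of_real (\<Sum>l<m. (cmod (W $$ (l,k)))\<^sup>2 * g l)"
proof -
  have "(mat_adjoint W * real_diag_mat m g * W) $$ (k,k) = (mat_adjoint W * (real_diag_mat m g * W)) $$ (k,k)"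
    using assoc_mult_mat[OF adj_carrier[OF W] rdiag_carrier W] by simp
  also have "\<dots> = (\<Sum>l<m. mat_adjoint W $$ (k,l) * (real_diag_mat m g * W) $$ (l,k))"
    using mult_entry[OF adj_carrier[OF W] mult_carrier_mat[OF rdiag_carrier W] k k] .
  also have "\<dots> = (\<Sum>l<m. complex_of_real ((cmod (W $$ (l,k)))\<^sup>2 * g l))"
  proof (intro sum.cong refl)
    fix l assume l: "l \<in> {..<m}"
    have "mat_adjoint W $$ (k,l) * (real_diag_mat m g * W) $$ (l,k) = cnj (W $$ (l,k)) * (complex_of_real (g l) * W $$ (l,k))"
      using W k l mult_rdiag_left[OF W, of l k g] by simp
    also have "\<dots> = complex_of_real (g l) * (W $$ (l,k) * cnj (W $$ (l,k)))" by (simp add: algebra_simps)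
    also have "\<dots> = complex_of_real ((cmod (W $$ (l,k)))\<^sup>2 * g l)"
      unfolding complex_norm_square[symmetric] by simp
    finally show "mat_adjoint W $$ (k,l) * (real_diag_mat m g * W) $$ (l,k) = complex_of_real ((cmod (W $$ (l,k)))\<^sup>2 * g l)" .
  qed
  also have "\<dots> = complex_of_real (\<Sum>l<m. (cmod (W $$ (l,k)))\<^sup>2 * g l)" by simp
  finally show ?thesis .
qed

lemma unitary_colsum: assumes W: "unitary_mat m W" and k: "k < m"
  shows "(\<Sum>l<m. (cmod (W $$ (l,k)))\<^sup>2) = 1"
proof -
  note w = unitaryD[OF W]
  have "complex_of_real (\<Sum>l<m. (cmod (W $$ (l,k)))\<^sup>2) = (\<Sum>l<m. mat_adjoint W $$ (k,l) * W $$ (l,k))"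
    unfolding of_real_sum
    using w k by (intro sum.cong refl) (use complex_norm_square[of "W $$ (_,k)"] in \<open>simp add: mult.commute\<close>)
  also have "\<dots> = (mat_adjoint W * W) $$ (k,k)" using mult_entry[OF w(2) w(1) k k] by simp
  also have "\<dots> = 1" using w k by simp
  finally show ?thesis by (metis of_real_eq_1_iff)
qed

lemma unitary_rowsum: assumes W: "unitary_mat m W" and l: "l < m"
  shows "(\<Sum>k<m. (cmod (W $$ (l,k)))\<^sup>2) = 1"
proof -
  note w = unitaryD[OF W]
  have "complex_of_real (\<Sum>k<m. (cmod (W $$ (l,k)))\<^sup>2) = (\<Sum>k<m. W $$ (l,k) * mat_adjoint W $$ (k,l))"
    unfolding of_real_sum
    using w l by (intro sum.cong refl) (use complex_norm_square[of "W $$ (l,_)"] in simp)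
  also have "\<dots> = (W * mat_adjoint W) $$ (l,l)" using mult_entry[OF w(1) w(2) l l] by simp
  also have "\<dots> = 1" using w l by simp
  finally show ?thesis by (metis of_real_eq_1_iff)
qed

lemma conj_diag: assumes U: "unitary_mat m U"
  shows "mat_adjoint U * (U * real_diag_mat m d * mat_adjoint U) * U = real_diag_mat m d"
proof -
  note u = unitaryD[OF U]
  let ?D = "real_diag_mat m d"
  have "mat_adjoint U * (U * ?D * mat_adjoint U) * U = (mat_adjoint U * U) * ?D * (mat_adjoint U * U)"
    using u by (simp add: assoc_mult_mat[of _ m m _ m _ m] mult_carrier_mat[of _ m m _ m] unitary_cancel2[OF U rdiag_carrier])
  also have "\<dots> = ?D" using u by simp
  finally show ?thesis .
qed

lemma conj_diag2: assumes U: "unitary_mat m U" and V: "unitary_mat m V"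
  shows "mat_adjoint U * (V * real_diag_mat m d * mat_adjoint V) * U
     = mat_adjoint (mat_adjoint V * U) * real_diag_mat m d * (mat_adjoint V * U)"
proof -
  note u = unitaryD[OF U] and v = unitaryD[OF V]
  have "mat_adjoint (mat_adjoint V * U) = mat_adjoint U * V" using adj_mult[OF v(2) u(1)] by simp
  moreover have "mat_adjoint U * (V * real_diag_mat m d * mat_adjoint V) * U
      = mat_adjoint U * V * real_diag_mat m d * (mat_adjoint V * U)"
    using u v by (simp add: assoc_mult_mat[of _ m m _ m _ m] mult_carrier_mat[of _ m m _ m])
  ultimately show ?thesis by simp
qed

lemma proots_lin_prod: "proots (prod_list (map (\<lambda>a. [:- a, 1:]) as)) = mset (as :: complex list)"
proof -
  have "proots (prod_list (map (\<lambda>a. [:- a, 1:]) as)) = sum_list (map proots (map (\<lambda>a. [:- a, 1:]) as))"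
  proof -
    have nz: "\<And>a::complex. [:- a, 1:] \<noteq> 0" by simp
    hence "0 \<notin> set (map (\<lambda>a. [:- a, 1:]) as)" by (metis (no_types, lifting) ex_map_conv in_set_conv_nth)
    from proots_prod_list[OF this] show ?thesis by simp
  qed
  also have "\<dots> = sum_list (map (\<lambda>a. {#a#}) as)" by (simp add: o_def)
  also have "\<dots> = mset as" by (induction as) auto
  finally show ?thesis .
qed

lemma eigs_diag: assumes U: "unitary_mat m U"
  shows "eigs_desc (U * real_diag_mat m d * mat_adjoint U) = rev (sort (map d [0..<m]))"
proof -
  note u = unitaryD[OF U]
  let ?D = "real_diag_mat m d"
  let ?g = "map (\<lambda>k. complex_of_real (d k)) [0..<m]"
  have sim: "similar_mat (U * ?D * mat_adjoint U) ?D"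
    unfolding similar_mat_def similar_mat_wit_def Let_def
    by (rule exI[of _ U], rule exI[of _ "mat_adjoint U"]) (use u in auto)
  have ut: "upper_triangular ?D" unfolding upper_triangular_def by simp
  have dm: "diag_mat ?D = ?g"
    unfolding diag_mat_def by simp
  have cp: "char_poly (U * ?D * mat_adjoint U) = prod_list (map (\<lambda>a. [:- a, 1:]) ?g)"
    using char_poly_similar[OF sim] char_poly_upper_triangular[OF rdiag_carrier ut] unfolding dm by simp
  have "proots (char_poly (U * ?D * mat_adjoint U)) = mset ?g"
    unfolding cp by (rule proots_lin_prod)
  hence "image_mset Re (proots (char_poly (U * ?D * mat_adjoint U))) = image_mset Re (mset ?g)"
    by simp
  also have "\<dots> = mset (map Re ?g)" by (rule mset_map[symmetric])
  also have "map Re ?g = map d [0..<m]" by simp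
  finally have "image_mset Re (proots (char_poly (U * ?D * mat_adjoint U))) = mset (map d [0..<m])" .
  thus ?thesis unfolding eigs_desc_def by (simp only: sorted_list_of_multiset_mset)
qed



lemma decomp_unique:
  fixes \<Lambda> \<Gamma> :: "nat \<Rightarrow> real ^ 'n"
  assumes U: "unitary_mat m U" and V: "unitary_mat m V"
    and eq: "\<And>i. U * real_diag_mat m (\<lambda>k. \<Lambda> k $ i) * mat_adjoint U = V * real_diag_mat m (\<lambda>k. \<Gamma> k $ i) * mat_adjoint V"
  shows "U * real_diag_mat m (\<lambda>k. f (\<Lambda> k)) * mat_adjoint U = V * real_diag_mat m (\<lambda>k. f (\<Gamma> k)) * mat_adjoint V"
proof -
  note u = unitaryD[OF U] and v = unitaryD[OF V]
  define W where "W = mat_adjoint V * U"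
  have Wu: "unitary_mat m W" unfolding W_def by (rule unitary_prod[OF V U])
  note w = unitaryD[OF Wu]
  have hU: "U = V * W" unfolding W_def using unitary_cancel1[OF V u(1)] by simp
  have hW: "W * mat_adjoint U = mat_adjoint V"
  proof -
    have "W * mat_adjoint U = mat_adjoint V * (U * mat_adjoint U)"
      unfolding W_def using assoc_mult_mat[OF v(2) u(1) u(2)] .
    thus ?thesis using u v by simp
  qed
  let ?F = "real_diag_mat m (\<lambda>k. f (\<Lambda> k))" and ?G = "real_diag_mat m (\<lambda>k. f (\<Gamma> k))"
  have ent: "W $$ (k,l) * complex_of_real (\<Lambda> l $ i) = complex_of_real (\<Gamma> k $ i) * W $$ (k,l)"
    if k: "k < m" and l: "l < m" for k l i
  proof -
    let ?D = "real_diag_mat m (\<lambda>k. \<Lambda> k $ i)" and ?E = "real_diag_mat m (\<lambda>k. \<Gamma> k $ i)"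
    have "?D = mat_adjoint U * (U * ?D * mat_adjoint U) * U" using conj_diag[OF U] by simp
    also have "\<dots> = mat_adjoint W * ?E * W" unfolding eq conj_diag2[OF U V] W_def ..
    finally have D: "?D = mat_adjoint W * ?E * W" .
    have "W * ?D = W * (mat_adjoint W * (?E * W))"
      unfolding D using assoc_mult_mat[OF w(2) rdiag_carrier w(1)] by simp
    also have "\<dots> = ?E * W" using unitary_cancel1[OF Wu mult_carrier_mat[OF rdiag_carrier w(1)]] .
    finally have "W * ?D = ?E * W" .
    hence "(W * ?D) $$ (k,l) = (?E * W) $$ (k,l)" by simp
    thus ?thesis using mult_rdiag_right[OF w(1) k l] mult_rdiag_left[OF w(1) k l] by simp
  qed
  have WF: "W * ?F = ?G * W"
  proof (rule eq_matI)
    fix k l assume "k < dim_row (?G * W)" "l < dim_col (?G * W)"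
    hence k: "k < m" and l: "l < m" using w by auto
    have "W $$ (k,l) * complex_of_real (f (\<Lambda> l)) = complex_of_real (f (\<Gamma> k)) * W $$ (k,l)"
    proof (cases "W $$ (k,l) = 0")
      case False
      have "\<forall>i. \<Lambda> l $ i = \<Gamma> k $ i"
      proof
        fix i
        from ent[OF k l, of i] False have "complex_of_real (\<Lambda> l $ i) = complex_of_real (\<Gamma> k $ i)"
          by (simp add: mult.commute)
        thus "\<Lambda> l $ i = \<Gamma> k $ i" by simp
      qed
      hence "\<Lambda> l = \<Gamma> k" by (simp add: Finite_Cartesian_Product.vec_eq_iff)
      thus ?thesis by (simp add: mult.commute)
    qed simp
    thus "(W * ?F) $$ (k,l) = (?G * W) $$ (k,l)"
      using mult_rdiag_right[OF w(1) k l] mult_rdiag_left[OF w(1) k l] by simp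
  qed (use w in auto)
  have "U * ?F * mat_adjoint U = V * (W * ?F * mat_adjoint U)"
    unfolding hU using v w u
    by (simp add: assoc_mult_mat[of _ m m _ m _ m] mult_carrier_mat[of _ m m _ m] adj_mult[OF v(1) w(1)])
  also have "W * ?F * mat_adjoint U = ?G * (W * mat_adjoint U)"
    unfolding WF using assoc_mult_mat[OF rdiag_carrier w(1) u(2)] .
  also have "\<dots> = ?G * mat_adjoint V" unfolding hW ..
  also have "V * (?G * mat_adjoint V) = V * ?G * mat_adjoint V"
    using assoc_mult_mat[OF v(1) rdiag_carrier v(2)] by simp
  finally show ?thesis .
qed

lemma joint_fc_char:
  fixes x :: "'n::finite \<Rightarrow> complex mat" and \<Lambda> :: "nat \<Rightarrow> real ^ 'n"
  assumes U: "unitary_mat m U" and x: "\<And>i. x i = U * real_diag_mat m (\<lambda>k. \<Lambda> k $ i) * mat_adjoint U"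
  shows "joint_fc m f x = U * real_diag_mat m (\<lambda>k. f (\<Lambda> k)) * mat_adjoint U"
  unfolding joint_fc_def
proof (rule the_equality)
  show "joint_fc_rel m f x (U * real_diag_mat m (\<lambda>k. f (\<Lambda> k)) * mat_adjoint U)"
    unfolding joint_fc_rel_def using U x by blast
next
  fix z assume "joint_fc_rel m f x z"
  then obtain V and \<Gamma> :: "nat \<Rightarrow> real ^ 'n" where V: "unitary_mat m V"
    and xV: "\<forall>i. x i = V * real_diag_mat m (\<lambda>k. \<Gamma> k $ i) * mat_adjoint V"
    and z: "z = V * real_diag_mat m (\<lambda>k. f (\<Gamma> k)) * mat_adjoint V"
    unfolding joint_fc_rel_def by blast
  show "z = U * real_diag_mat m (\<lambda>k. f (\<Lambda> k)) * mat_adjoint U"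
    unfolding z by (rule decomp_unique[OF V U]) (use x xV in metis)
qed



lemma exists_orth:
  fixes u :: "nat \<Rightarrow> complex vec"
  assumes k: "k < N" and u: "\<And>r. r < k \<Longrightarrow> u r \<in> carrier_vec N"
  shows "\<exists>v\<in>carrier_vec N. v \<noteq> 0\<^sub>v N \<and> (\<forall>r<k. u r \<bullet> v = 0)"
proof -
  define c where "c = (\<lambda>i. if i < k then u i else 0\<^sub>v N)"
  have c: "c \<in> {0..<N} \<rightarrow> carrier_vec N" unfolding c_def using u by auto
  define M where "M = mat\<^sub>r N N (\<lambda>i. if i = k then 0\<^sub>v N else c i)"
  have M: "M \<in> carrier_mat N N" unfolding M_def by auto
  have "det M = 0" unfolding M_def by (rule det_row_0[OF k c])
  then obtain v where v: "v \<in> carrier_vec N" "v \<noteq> 0\<^sub>v N" "M *\<^sub>v v = 0\<^sub>v N"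
    using det_0_iff_vec_prod_zero[OF M] by auto
  have "u r \<bullet> v = 0" if r: "r < k" for r
  proof -
    have rN: "r < N" using r k by simp
    have "(M *\<^sub>v v) $ r = row M r \<bullet> v" using rN M by simp
    also have "row M r = u r" unfolding M_def using r rN u[OF r] by (simp add: c_def)
    finally show ?thesis using v(3) rN by simp
  qed
  thus ?thesis using v(1,2) by (intro bexI[of _ v]) auto
qed

definition kv :: "complex mat \<Rightarrow> complex vec \<Rightarrow> nat \<Rightarrow> complex vec" where
  "kv A v j = ((\<lambda>u. A *\<^sub>v u) ^^ j) v"

lemma kv_0[simp]: "kv A v 0 = v" and kv_Suc[simp]: "kv A v (Suc j) = A *\<^sub>v kv A v j"
  by (simp_all add: kv_def)

lemma kv_carrier: assumes "A \<in> carrier_mat m m" "v \<in> carrier_vec m" shows "kv A v j \<in> carrier_vec m"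
proof (induction j)
  case 0 then show ?case using assms by simp
next
  case (Suc j) then show ?case using assms by simp
qed

lemma kv_dim: "A \<in> carrier_mat m m \<Longrightarrow> v \<in> carrier_vec m \<Longrightarrow> dim_vec (kv A v j) = m"
  using kv_carrier carrier_vecD by metis

fun kry :: "complex mat \<Rightarrow> complex vec \<Rightarrow> (nat \<Rightarrow> complex) \<Rightarrow> nat \<Rightarrow> complex vec" where
  "kry A v b 0 = 0\<^sub>v (dim_vec v)"
| "kry A v b (Suc n) = kry A v b n + b n \<cdot>\<^sub>v kv A v n"

lemma kry_carrier: assumes "A \<in> carrier_mat m m" "v \<in> carrier_vec m"
  shows "kry A v b n \<in> carrier_vec m"
proof (induction n)
  case 0 then show ?case using assms(2) by (simp add: carrier_vecD)
next
  case (Suc n)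
  have "kv A v n \<in> carrier_vec m" using kv_carrier[OF assms] .
  then show ?case using Suc by simp
qed

lemma kry_dim: "A \<in> carrier_mat m m \<Longrightarrow> v \<in> carrier_vec m \<Longrightarrow> dim_vec (kry A v b n) = m"
  using kry_carrier carrier_vecD by metis

lemma kry_index: assumes A: "A \<in> carrier_mat m m" and v: "v \<in> carrier_vec m" and i: "i < m"
  shows "kry A v b n $ i = (\<Sum>j<n. b j * kv A v j $ i)"
proof (induction n)
  case 0 then show ?case using v i by simp
next
  case (Suc n)
  have "kry A v b (Suc n) $ i = kry A v b n $ i + b n * kv A v n $ i"
    using kry_dim[OF A v] kv_dim[OF A v] i by simp
  then show ?case using Suc by simp
qed

lemma kry_mult: assumes A: "A \<in> carrier_mat m m" and v: "v \<in> carrier_vec m" and i: "i < m"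
  shows "(A *\<^sub>v kry A v b n) $ i = (\<Sum>j<n. b j * kv A v (Suc j) $ i)"
proof -
  have "(A *\<^sub>v kry A v b n) $ i = (\<Sum>c<m. A $$ (i,c) * kry A v b n $ c)"
    by (rule mult_vec_entry[OF A kry_carrier[OF A v] i])
  also have "\<dots> = (\<Sum>c<m. A $$ (i,c) * (\<Sum>j<n. b j * kv A v j $ c))"
    by (intro sum.cong refl) (simp add: kry_index[OF A v])
  also have "\<dots> = (\<Sum>c<m. \<Sum>j<n. b j * (A $$ (i,c) * kv A v j $ c))"
    by (simp add: sum_distrib_left mult.left_commute)
  also have "\<dots> = (\<Sum>j<n. \<Sum>c<m. b j * (A $$ (i,c) * kv A v j $ c))"
    by (rule sum.swap)
  also have "\<dots> = (\<Sum>j<n. b j * (\<Sum>c<m. A $$ (i,c) * kv A v j $ c))"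
    by (simp add: sum_distrib_left)
  also have "\<dots> = (\<Sum>j<n. b j * kv A v (Suc j) $ i)"
    by (intro sum.cong refl) (simp add: mult_vec_entry[OF A kv_carrier[OF A v] i])
  finally show ?thesis .
qed

lemma kry_id: assumes A: "A \<in> carrier_mat m m" and v: "v \<in> carrier_vec m" and i: "i < m"
  shows "kry A v (\<lambda>j. (if j = 0 then 0 else b (j - 1)) - \<mu> * b j) (Suc N) $ i
     = (A *\<^sub>v kry A v b N) $ i - \<mu> * kry A v b (Suc N) $ i"
proof -
  have "kry A v (\<lambda>j. (if j = 0 then 0 else b (j - 1)) - \<mu> * b j) (Suc N) $ i
    = (\<Sum>j<Suc N. (if j = 0 then 0 else b (j - 1)) * kv A v j $ i) - \<mu> * (\<Sum>j<Suc N. b j * kv A v j $ i)"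
    unfolding kry_index[OF A v i] by (simp add: algebra_simps sum_subtractf sum_distrib_left)
  also have "(\<Sum>j<Suc N. (if j = 0 then 0 else b (j - 1)) * kv A v j $ i) = (\<Sum>j<N. b j * kv A v (Suc j) $ i)"
    unfolding sum.lessThan_Suc_shift by simp
  finally show ?thesis unfolding kry_mult[OF A v i] kry_index[OF A v i] .
qed

lemma kry_cong: assumes A: "A \<in> carrier_mat m m" and v: "v \<in> carrier_vec m"
  and eq: "\<And>j. j < n \<Longrightarrow> b j = c j"
  shows "kry A v b n = kry A v c n"
  by (rule eq_vecI) (simp_all add: kry_dim[OF A v] kry_index[OF A v] eq)

definition subsp :: "nat \<Rightarrow> complex vec set \<Rightarrow> bool" where
  "subsp m S \<longleftrightarrow> S \<subseteq> carrier_vec m \<and> 0\<^sub>v m \<in> S \<and> (\<forall>u\<in>S. \<forall>w\<in>S. u + w \<in> S) \<and> (\<forall>a. \<forall>u\<in>S. a \<cdot>\<^sub>v u \<in> S)"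

lemma krylov_ev:
  assumes A: "A \<in> carrier_mat m m" and S: "subsp m S" and SA: "\<And>u. u \<in> S \<Longrightarrow> A *\<^sub>v u \<in> S"
    and vS: "v \<in> S" and v0: "v \<noteq> 0\<^sub>v m"
  shows "\<exists>w\<in>S. w \<noteq> 0\<^sub>v m \<and> (\<exists>\<mu>. A *\<^sub>v w = \<mu> \<cdot>\<^sub>v w)"
proof -
  have Sc: "S \<subseteq> carrier_vec m" and S0: "0\<^sub>v m \<in> S" and Sadd: "\<And>u w. u \<in> S \<Longrightarrow> w \<in> S \<Longrightarrow> u + w \<in> S"
    and Ssm: "\<And>a u. u \<in> S \<Longrightarrow> a \<cdot>\<^sub>v u \<in> S" using S unfolding subsp_def by auto
  have v: "v \<in> carrier_vec m" using vS Sc by auto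
  have kvS: "kv A v j \<in> S" for j by (induction j) (use vS SA in auto)
  have kryS: "kry A v b n \<in> S" for b n
    by (induction n) (use S0 v Sadd Ssm kvS in auto)
  have main: "\<forall>c. (\<exists>j\<le>n. c j \<noteq> 0) \<longrightarrow> kry A v c (Suc n) = 0\<^sub>v m \<longrightarrow> (\<exists>w\<in>S. w \<noteq> 0\<^sub>v m \<and> (\<exists>\<mu>. A *\<^sub>v w = \<mu> \<cdot>\<^sub>v w))" for n
proof (induction n)
    case 0
    show ?case
    proof (intro allI impI)
      fix c :: "nat \<Rightarrow> complex" assume "\<exists>j\<le>0. c j \<noteq> 0" and z: "kry A v c (Suc 0) = 0\<^sub>v m"
      hence c0: "c 0 \<noteq> 0" by auto
      have "v = 0\<^sub>v m"
      proof (rule eq_vecI)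
        fix i assume "i < dim_vec (0\<^sub>v m)"
        hence i: "i < m" by simp
        have "kry A v c (Suc 0) $ i = c 0 * v $ i" using kry_index[OF A v i, of c "Suc 0"] by simp
        thus "v $ i = 0\<^sub>v m $ i" using z i c0 by simp
      qed (use v in simp)
      with v0 show "\<exists>w\<in>S. w \<noteq> 0\<^sub>v m \<and> (\<exists>\<mu>. A *\<^sub>v w = \<mu> \<cdot>\<^sub>v w)" by simp
    qed
  next
    case (Suc n)
    show ?case
    proof (intro allI impI)
      fix c :: "nat \<Rightarrow> complex" assume ex: "\<exists>j\<le>Suc n. c j \<noteq> 0" and z: "kry A v c (Suc (Suc n)) = 0\<^sub>v m"
      show "\<exists>w\<in>S. w \<noteq> 0\<^sub>v m \<and> (\<exists>\<mu>. A *\<^sub>v w = \<mu> \<cdot>\<^sub>v w)"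
      proof (cases "c (Suc n) = 0")
        case True
        have ex': "\<exists>j\<le>n. c j \<noteq> 0" using ex True by (metis le_Suc_eq)
        have "kry A v c (Suc n) = kry A v c (Suc (Suc n))"
          by (rule eq_vecI) (simp_all add: kry_dim[OF A v] kv_dim[OF A v] carrier_matD[OF A] True kry_index[OF A v])
        with z have "kry A v c (Suc n) = 0\<^sub>v m" by simp
        with Suc.IH ex' show ?thesis by metis
      next
        case False
        define p where "p = Poly (map c [0..<Suc (Suc n)])"
        have cp: "coeff p j = (if j < Suc (Suc n) then c j else 0)" for j
          unfolding p_def by (simp add: nth_default_def del: upt_Suc)
        have "Suc n \<le> degree p" by (rule le_degree) (use False cp in simp)
        hence "\<not> constant (poly p)" by (simp add: constant_degree)
        then obtain \<mu> where "poly p \<mu> = 0" using fundamental_theorem_of_algebra by metis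
        then obtain q where pq: "p = [:- \<mu>, 1:] * q" using poly_eq_0_iff_dvd by (metis dvdE)
        have p0: "p \<noteq> 0" using False cp[of "Suc n"] by auto
        hence q0: "q \<noteq> 0" using pq by auto
        have "degree p \<le> Suc n" by (rule degree_le) (simp add: cp)
        moreover have "degree p = degree [:- \<mu>, 1:] + degree q" unfolding pq
          by (rule degree_mult_eq) (use q0 in auto)
        ultimately have dq: "degree q \<le> n" by simp
        define b where "b = coeff q"
        have bz: "b j = 0" if "j > n" for j unfolding b_def using dq that by (simp add: coeff_eq_0)
        have cq: "coeff p j = (if j = 0 then 0 else b (j - 1)) - \<mu> * b j" for j
          unfolding pq b_def by (cases j) simp_all
        have bn: "b n = c (Suc n)" using cq[of "Suc n"] cp[of "Suc n"] bz[of "Suc n"] by simp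
        define w where "w = kry A v b (Suc n)"
        have wS: "w \<in> S" unfolding w_def by (rule kryS)
        have w: "w \<in> carrier_vec m" unfolding w_def by (rule kry_carrier[OF A v])
        have eig: "A *\<^sub>v w = \<mu> \<cdot>\<^sub>v w"
        proof (rule eq_vecI)
          fix i assume "i < dim_vec (\<mu> \<cdot>\<^sub>v w)"
          hence i: "i < m" using w by simp
          have k1: "kry A v b (Suc (Suc n)) $ i = w $ i"
          proof -
            have "kry A v b (Suc (Suc n)) $ i = (\<Sum>j<Suc (Suc n). b j * kv A v j $ i)" by (rule kry_index[OF A v i])
            also have "\<dots> = (\<Sum>j<Suc n. b j * kv A v j $ i) + b (Suc n) * kv A v (Suc n) $ i" by (rule sum.lessThan_Suc)
            also have "\<dots> = kry A v b (Suc n) $ i" using bz[of "Suc n"] kry_index[OF A v i, of b "Suc n"] by simp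
            finally show ?thesis unfolding w_def .
          qed
          have "kry A v (\<lambda>j. (if j = 0 then 0 else b (j - 1)) - \<mu> * b j) (Suc (Suc n)) = kry A v c (Suc (Suc n))"
            by (rule kry_cong[OF A v]) (simp add: cq[symmetric] cp)
          hence "(A *\<^sub>v w) $ i - \<mu> * w $ i = 0"
            using kry_id[OF A v i, of b \<mu> "Suc n"] z i k1 unfolding w_def by simp
          thus "(A *\<^sub>v w) $ i = (\<mu> \<cdot>\<^sub>v w) $ i" using i w by simp
        qed (use A w in simp)
        show ?thesis
        proof (cases "w = 0\<^sub>v m")
          case False
          thus ?thesis using wS eig by metis
        next
          case True
          have "\<exists>j\<le>n. b j \<noteq> 0" using bn False by auto
          with Suc.IH True show ?thesis unfolding w_def by metis
        qed
      qed
    qed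
  qed
  define u where "u = (\<lambda>r. vec (Suc m) (\<lambda>j. kv A v j $ r))"
  obtain cv where cv: "cv \<in> carrier_vec (Suc m)" "cv \<noteq> 0\<^sub>v (Suc m)" "\<forall>r<m. u r \<bullet> cv = 0"
    using exists_orth[of m "Suc m" u] unfolding u_def by auto
  have ex: "\<exists>j\<le>m. cv $ j \<noteq> 0"
  proof (rule ccontr)
    assume "\<not> ?thesis"
    hence "cv = 0\<^sub>v (Suc m)" using cv(1) by (intro eq_vecI) auto
    with cv(2) show False by simp
  qed
  have z: "kry A v (\<lambda>j. cv $ j) (Suc m) = 0\<^sub>v m"
  proof (rule eq_vecI)
    fix i assume "i < dim_vec (0\<^sub>v m)"
    hence i: "i < m" by simp
    have "kry A v (\<lambda>j. cv $ j) (Suc m) $ i = (\<Sum>j<Suc m. cv $ j * kv A v j $ i)" by (rule kry_index[OF A v i])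
    also have "\<dots> = u i \<bullet> cv" unfolding u_def scalar_prod_def using cv(1)
      by (simp add: atLeast0LessThan mult.commute)
    finally show "kry A v (\<lambda>j. cv $ j) (Suc m) $ i = 0\<^sub>v m $ i" using cv(3) i by simp
  qed (simp only: kry_dim[OF A v] index_zero_vec(2))
  show ?thesis using main[of m] ex z by metis
qed



lemma mv_zero: assumes A: "(A::complex mat) \<in> carrier_mat n m" shows "A *\<^sub>v 0\<^sub>v m = 0\<^sub>v n"
proof (rule eq_vecI)
  fix i assume "i < dim_vec (0\<^sub>v n)" hence i: "i < n" by simp
  show "(A *\<^sub>v 0\<^sub>v m) $ i = 0\<^sub>v n $ i" using mult_vec_entry[OF A zero_carrier_vec i] i by simp
qed (use A in simp)

lemma ip_zero: "(u::complex vec) \<in> carrier_vec m \<Longrightarrow> u \<bullet> 0\<^sub>v m = 0"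
  by (simp add: scalar_prod_def)

lemma inner_sym: assumes u: "(u::complex vec) \<in> carrier_vec m" and w: "(w::complex vec) \<in> carrier_vec m"
  shows "scalar_prod (conjugate u) w = cnj (scalar_prod (conjugate w) u)"
  using u w by (simp add: scalar_prod_def cnj_sum conjugate_complex_def mult.commute)

lemma herm_swap: assumes H: "H \<in> carrier_mat m m" and Hs: "mat_adjoint H = H"
  and u: "(u::complex vec) \<in> carrier_vec m" and w: "w \<in> carrier_vec m"
  shows "conjugate u \<bullet> (H *\<^sub>v w) = conjugate (H *\<^sub>v u) \<bullet> w"
proof -
  have He: "cnj (H $$ (c,r)) = H $$ (r,c)" if "r < m" "c < m" for r c
  proof -
    have "mat_adjoint H $$ (r,c) = cnj (H $$ (c,r))" using H that by simp
    thus ?thesis using Hs by simp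
  qed
  have "conjugate u \<bullet> (H *\<^sub>v w) = (\<Sum>r<m. cnj (u $ r) * (\<Sum>c<m. H $$ (r,c) * w $ c))"
    unfolding scalar_prod_def using H u w
    by (simp add: atLeast0LessThan mult_vec_entry[OF H w] conjugate_complex_def del: index_mult_mat_vec)
  also have "\<dots> = (\<Sum>r<m. \<Sum>c<m. cnj (u $ r) * H $$ (r,c) * w $ c)"
    by (simp add: sum_distrib_left mult.assoc)
  also have "\<dots> = (\<Sum>c<m. \<Sum>r<m. cnj (u $ r) * H $$ (r,c) * w $ c)"
    by (rule sum.swap)
  also have "\<dots> = (\<Sum>c<m. cnj (\<Sum>r<m. H $$ (c,r) * u $ r) * w $ c)"
    by (intro sum.cong refl) (simp add: cnj_sum sum_distrib_right sum_distrib_left He mult.commute)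
  also have "\<dots> = conjugate (H *\<^sub>v u) \<bullet> w"
    unfolding scalar_prod_def using H u w
    by (simp add: atLeast0LessThan mult_vec_entry[OF H u] conjugate_complex_def del: index_mult_mat_vec)
  finally show ?thesis .
qed

lemma inner_self: fixes w :: "complex Matrix.vec" assumes w: "w \<in> carrier_vec m"
  shows "scalar_prod (conjugate w) w = complex_of_real (\<Sum>i<m. (cmod (w $ i))\<^sup>2)"
proof -
  have "conjugate w \<bullet> w = (\<Sum>i<m. cnj (w $ i) * w $ i)"
    unfolding scalar_prod_def using w by (simp add: atLeast0LessThan conjugate_complex_def)
  also have "\<dots> = (\<Sum>i<m. complex_of_real ((cmod (w $ i))\<^sup>2))"
    by (intro sum.cong refl) (metis complex_norm_square mult.commute)
  finally show ?thesis by simp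
qed

lemma norm_pos: fixes w :: "complex Matrix.vec" assumes w: "w \<in> carrier_vec m" and w0: "w \<noteq> 0\<^sub>v m"
  shows "(\<Sum>i<m. (cmod (w $ i))\<^sup>2) > 0"
proof -
  obtain i where i: "i < m" "w $ i \<noteq> 0"
  proof (rule ccontr)
    assume "\<not> thesis"
    hence "\<forall>i<m. w $ i = 0" using that by blast
    hence "w = 0\<^sub>v m" using w by (intro eq_vecI) auto
    with w0 show False by simp
  qed
  have "0 < (cmod (w $ i))\<^sup>2" using i by simp
  also have "\<dots> \<le> (\<Sum>i<m. (cmod (w $ i))\<^sup>2)"
    by (rule member_le_sum) (use i in auto)
  finally show ?thesis .
qed

lemma common_ev:
  fixes x :: "'n \<Rightarrow> complex mat"
  assumes J: "finite J" and xc: "\<And>i. x i \<in> carrier_mat m m" and comm: "\<And>i j. x i * x j = x j * x i"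
  shows "subsp m S \<Longrightarrow> (\<And>i u. u \<in> S \<Longrightarrow> x i *\<^sub>v u \<in> S) \<Longrightarrow> v \<in> S \<Longrightarrow> v \<noteq> 0\<^sub>v m
    \<Longrightarrow> \<exists>w\<in>S. w \<noteq> 0\<^sub>v m \<and> (\<forall>i\<in>J. \<exists>\<mu>. x i *\<^sub>v w = \<mu> \<cdot>\<^sub>v w)"
  using J
proof (induction J arbitrary: S v rule: finite_induct)
  case empty
  then show ?case by auto
next
  case (insert k J)
  have S: "subsp m S" by fact
  have Sc: "S \<subseteq> carrier_vec m" and S0: "0\<^sub>v m \<in> S" and Sadd: "\<And>u w. u \<in> S \<Longrightarrow> w \<in> S \<Longrightarrow> u + w \<in> S"
    and Ssm: "\<And>a u. u \<in> S \<Longrightarrow> a \<cdot>\<^sub>v u \<in> S" using S unfolding subsp_def by auto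
  obtain w1 \<mu> where w1: "w1 \<in> S" "w1 \<noteq> 0\<^sub>v m" "x k *\<^sub>v w1 = \<mu> \<cdot>\<^sub>v w1"
    using krylov_ev[OF xc S insert.prems(2) insert.prems(3,4)] by metis
  define S' where "S' = {u \<in> S. x k *\<^sub>v u = \<mu> \<cdot>\<^sub>v u}"
  have S'c: "u \<in> S' \<Longrightarrow> u \<in> carrier_vec m" for u unfolding S'_def using Sc by auto
  have "subsp m S'"
    unfolding subsp_def
  proof (intro conjI ballI allI)
    show "S' \<subseteq> carrier_vec m" using S'c by auto
    have "x k *\<^sub>v 0\<^sub>v m = \<mu> \<cdot>\<^sub>v 0\<^sub>v m" using mv_zero[OF xc] by (intro eq_vecI) auto
    thus "0\<^sub>v m \<in> S'" unfolding S'_def using S0 by simp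
  next
    fix u w assume u: "u \<in> S'" and w: "w \<in> S'"
    have "x k *\<^sub>v (u + w) = x k *\<^sub>v u + x k *\<^sub>v w"
      using mult_add_distrib_mat_vec[OF xc S'c[OF u] S'c[OF w]] .
    also have "\<dots> = \<mu> \<cdot>\<^sub>v u + \<mu> \<cdot>\<^sub>v w" using u w unfolding S'_def by simp
    also have "\<dots> = \<mu> \<cdot>\<^sub>v (u + w)" using smult_add_distrib_vec[OF S'c[OF u] S'c[OF w]] by simp
    finally show "u + w \<in> S'" using u w Sadd unfolding S'_def by simp
  next
    fix a u assume u: "u \<in> S'"
    have "x k *\<^sub>v (a \<cdot>\<^sub>v u) = a \<cdot>\<^sub>v (x k *\<^sub>v u)" using mult_mat_vec[OF xc S'c[OF u]] .
    also have "\<dots> = a \<cdot>\<^sub>v (\<mu> \<cdot>\<^sub>v u)" using u unfolding S'_def by simp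
    also have "\<dots> = \<mu> \<cdot>\<^sub>v (a \<cdot>\<^sub>v u)" by (simp add: smult_smult_assoc mult.commute)
    finally show "a \<cdot>\<^sub>v u \<in> S'" using u Ssm unfolding S'_def by simp
  qed
  moreover have "x i *\<^sub>v u \<in> S'" if u: "u \<in> S'" for i u
  proof -
    have uc: "u \<in> carrier_vec m" using S'c[OF u] .
    have "x k *\<^sub>v (x i *\<^sub>v u) = (x k * x i) *\<^sub>v u" using assoc_mult_mat_vec[OF xc xc uc] by simp
    also have "\<dots> = (x i * x k) *\<^sub>v u" by (simp add: comm)
    also have "\<dots> = x i *\<^sub>v (x k *\<^sub>v u)" using assoc_mult_mat_vec[OF xc xc uc] .
    also have "\<dots> = x i *\<^sub>v (\<mu> \<cdot>\<^sub>v u)" using u unfolding S'_def by simp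
    also have "\<dots> = \<mu> \<cdot>\<^sub>v (x i *\<^sub>v u)" using mult_mat_vec[OF xc uc] .
    finally show ?thesis using insert.prems(2) u unfolding S'_def by simp
  qed
  moreover have "w1 \<in> S'" unfolding S'_def using w1 by simp
  ultimately obtain w where w: "w \<in> S'" "w \<noteq> 0\<^sub>v m" "\<forall>i\<in>J. \<exists>\<mu>. x i *\<^sub>v w = \<mu> \<cdot>\<^sub>v w"
    using insert.IH[of S' w1] w1(2) by metis
  have "w \<in> S" and "x k *\<^sub>v w = \<mu> \<cdot>\<^sub>v w" using w(1) unfolding S'_def by auto
  thus ?case using w(2,3) by auto
qed



definition onl :: "nat \<Rightarrow> complex Matrix.vec list \<Rightarrow> bool" where
  "onl m vs \<longleftrightarrow> set vs \<subseteq> carrier_vec m \<and>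
     (\<forall>a<length vs. \<forall>b<length vs. scalar_prod (conjugate (vs!a)) (vs!b) = (if a = b then 1 else 0))"

lemma grow:
  fixes x :: "'n::finite \<Rightarrow> complex mat"
  assumes sa: "\<And>i. self_adjoint m (x i)" and comm: "\<And>i j. x i * x j = x j * x i"
  shows "k \<le> m \<Longrightarrow> \<exists>vs. length vs = k \<and> onl m vs \<and> (\<forall>a<k. \<forall>i. \<exists>\<mu>. x i *\<^sub>v vs!a = \<mu> \<cdot>\<^sub>v vs!a)"
proof (induction k)
  case 0
  show ?case by (rule exI[of _ "[]"]) (simp add: onl_def)
next
  case (Suc k)
  have xc: "x i \<in> carrier_mat m m" for i using sa unfolding self_adjoint_def by auto
  have xs: "mat_adjoint (x i) = x i" for i using sa unfolding self_adjoint_def by auto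
  from Suc obtain vs where len: "length vs = k" and on: "onl m vs"
    and ev: "\<forall>a<k. \<forall>i. \<exists>\<mu>. x i *\<^sub>v vs!a = \<mu> \<cdot>\<^sub>v vs!a" by auto
  have vc: "vs ! a \<in> carrier_vec m" if "a < k" for a using on that len unfolding onl_def by auto
  define S where "S = {w \<in> carrier_vec m. \<forall>a<k. scalar_prod (conjugate (vs!a)) w = 0}"
  have Sc: "w \<in> S \<Longrightarrow> w \<in> carrier_vec m" for w unfolding S_def by auto
  have subS: "subsp m S"
    unfolding subsp_def
  proof (intro conjI ballI allI)
    show "S \<subseteq> carrier_vec m" using Sc by auto
    show "0\<^sub>v m \<in> S" unfolding S_def using vc by (auto simp: ip_zero)
  next
    fix u w assume u: "u \<in> S" and w: "w \<in> S"
    have "scalar_prod (conjugate (vs!a)) (u + w) = 0" if a: "a < k" for a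
      using scalar_prod_add_distrib[OF carrier_vec_conjugate[OF vc[OF a]] Sc[OF u] Sc[OF w]] u w a
      unfolding S_def by simp
    thus "u + w \<in> S" using u w unfolding S_def by auto
  next
    fix c u assume u: "u \<in> S"
    have "scalar_prod (conjugate (vs!a)) (c \<cdot>\<^sub>v u) = 0" if a: "a < k" for a
      using scalar_prod_smult_distrib[OF carrier_vec_conjugate[OF vc[OF a]] Sc[OF u]] u a
      unfolding S_def by simp
    thus "c \<cdot>\<^sub>v u \<in> S" using u unfolding S_def by auto
  qed
  have invS: "x i *\<^sub>v u \<in> S" if u: "u \<in> S" for i u
  proof -
    have uc: "u \<in> carrier_vec m" using Sc[OF u] .
    have "scalar_prod (conjugate (vs!a)) (x i *\<^sub>v u) = 0" if a: "a < k" for a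
    proof -
      obtain \<mu> where mu: "x i *\<^sub>v vs!a = \<mu> \<cdot>\<^sub>v vs!a" using ev a by blast
      have "scalar_prod (conjugate (vs!a)) (x i *\<^sub>v u) = scalar_prod (conjugate (x i *\<^sub>v vs!a)) u"
        by (rule herm_swap[OF xc xs vc[OF a] uc])
      also have "\<dots> = scalar_prod (conjugate \<mu> \<cdot>\<^sub>v conjugate (vs!a)) u" unfolding mu conjugate_smult_vec ..
      also have "\<dots> = conjugate \<mu> * scalar_prod (conjugate (vs!a)) u"
        by (rule smult_scalar_prod_distrib[OF carrier_vec_conjugate[OF vc[OF a]] uc])
      also have "\<dots> = 0" using u a unfolding S_def by simp
      finally show ?thesis .
    qed
    thus ?thesis using mult_mat_vec_carrier[OF xc uc] unfolding S_def by auto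
  qed
  have km: "k < m" using Suc.prems by simp
  obtain v0 where v0: "v0 \<in> carrier_vec m" "v0 \<noteq> 0\<^sub>v m" "\<forall>r<k. scalar_prod (conjugate (vs!r)) v0 = 0"
    using exists_orth[of k m "\<lambda>r. conjugate (vs!r)"] km vc by auto
  have v0S: "v0 \<in> S" unfolding S_def using v0 by auto
  obtain w where wS: "w \<in> S" and w0: "w \<noteq> 0\<^sub>v m" and wev: "\<forall>i\<in>UNIV. \<exists>\<mu>. x i *\<^sub>v w = \<mu> \<cdot>\<^sub>v w"
    using common_ev[of UNIV x m S v0, OF finite_class.finite_UNIV xc comm subS invS v0S v0(2)] by metis
  have wc: "w \<in> carrier_vec m" using Sc[OF wS] .
  define s where "s = (\<Sum>i<m. (cmod (w $ i))\<^sup>2)"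
  have s0: "s > 0" unfolding s_def by (rule norm_pos[OF wc w0])
  have ws: "scalar_prod (conjugate w) w = complex_of_real s" unfolding s_def by (rule inner_self[OF wc])
  define c where "c = complex_of_real (1 / sqrt s)"
  have cc: "conjugate c = c" unfolding c_def by (simp add: conjugate_complex_def)
  have cs: "c * c * complex_of_real s = 1"
  proof -
    have "(1 / sqrt s) * (1 / sqrt s) * s = 1" using s0 by (simp add: field_simps)
    hence "complex_of_real ((1 / sqrt s) * (1 / sqrt s) * s) = 1" by simp
    thus ?thesis unfolding c_def by (simp only: of_real_mult)
  qed
  define w' where "w' = c \<cdot>\<^sub>v w"
  have w'c: "w' \<in> carrier_vec m" unfolding w'_def using wc by simp
  have cw': "conjugate w' = c \<cdot>\<^sub>v conjugate w" unfolding w'_def conjugate_smult_vec cc ..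
  define vs' where "vs' = vs @ [w']"
  have nth': "vs' ! a = (if a < k then vs ! a else w')" if "a < Suc k" for a
    unfolding vs'_def using len that by (simp add: nth_append)
  have ip1: "scalar_prod (conjugate (vs!a)) w' = 0" if a: "a < k" for a
  proof -
    have "scalar_prod (conjugate (vs!a)) w' = c * scalar_prod (conjugate (vs!a)) w"
      unfolding w'_def by (rule scalar_prod_smult_distrib[OF carrier_vec_conjugate[OF vc[OF a]] wc])
    thus ?thesis using wS a unfolding S_def by simp
  qed
  have ip2: "scalar_prod (conjugate w') (vs!a) = 0" if a: "a < k" for a
    using inner_sym[OF w'c vc[OF a]] ip1[OF a] by simp
  have ip3: "scalar_prod (conjugate w') w' = 1"
  proof -
    have "scalar_prod (conjugate w') w' = c * (c * scalar_prod (conjugate w) w)"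
      unfolding cw' unfolding w'_def
      using smult_scalar_prod_distrib[OF carrier_vec_conjugate[OF wc] smult_carrier_vec[THEN iffD2, OF wc]]
        scalar_prod_smult_distrib[OF carrier_vec_conjugate[OF wc] wc] by simp
    also have "\<dots> = 1" using cs ws by (simp add: mult.assoc)
    finally show ?thesis .
  qed
  have onl': "onl m vs'"
    unfolding onl_def
  proof (intro conjI allI impI)
    show "set vs' \<subseteq> carrier_vec m" unfolding vs'_def using on w'c unfolding onl_def by auto
  next
    fix a b assume a: "a < length vs'" and b: "b < length vs'"
    hence a': "a < Suc k" and b': "b < Suc k" unfolding vs'_def using len by auto
    show "scalar_prod (conjugate (vs'!a)) (vs'!b) = (if a = b then 1 else 0)"
    proof (cases "a < k")
      case True
      show ?thesis
      proof (cases "b < k")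
        case True
        thus ?thesis using \<open>a < k\<close> on len nth'[OF a'] nth'[OF b'] unfolding onl_def by auto
      next
        case False
        thus ?thesis using \<open>a < k\<close> ip1 nth'[OF a'] nth'[OF b'] by auto
      qed
    next
      case False
      hence ak: "a = k" using a' by simp
      show ?thesis
      proof (cases "b < k")
        case True
        thus ?thesis using ak ip2 nth'[OF a'] nth'[OF b'] by auto
      next
        case False
        hence "b = k" using b' by simp
        thus ?thesis using ak ip3 nth'[OF a'] nth'[OF b'] by auto
      qed
    qed
  qed
  have ev': "\<forall>a<Suc k. \<forall>i. \<exists>\<mu>. x i *\<^sub>v vs'!a = \<mu> \<cdot>\<^sub>v vs'!a"
  proof (intro allI impI)
    fix a i assume a: "a < Suc k"
    show "\<exists>\<mu>. x i *\<^sub>v vs'!a = \<mu> \<cdot>\<^sub>v vs'!a"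
    proof (cases "a < k")
      case True
      thus ?thesis using ev nth'[OF a] by simp
    next
      case False
      obtain \<mu> where mu: "x i *\<^sub>v w = \<mu> \<cdot>\<^sub>v w" using wev by blast
      have "x i *\<^sub>v w' = c \<cdot>\<^sub>v (\<mu> \<cdot>\<^sub>v w)" unfolding w'_def mult_mat_vec[OF xc wc] mu ..
      also have "\<dots> = \<mu> \<cdot>\<^sub>v w'" unfolding w'_def by (simp add: smult_smult_assoc mult.commute)
      finally show ?thesis using False nth'[OF a] by auto
    qed
  qed
  show ?case using onl' ev' len unfolding vs'_def by (intro exI[of _ "vs @ [w']"]) simp
qed



lemma cnj_real: "cnj z = z \<Longrightarrow> complex_of_real (Re z) = z"
  by (simp add: complex_eq_iff)

theorem SD:
  fixes x :: "'n::finite \<Rightarrow> complex mat"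
  assumes sa: "\<And>i. self_adjoint m (x i)" and ab: "abelian_tuple x"
  shows "\<exists>U (\<Lambda>::nat \<Rightarrow> real^'n). unitary_mat m U \<and> (\<forall>i. x i = U * real_diag_mat m (\<lambda>k. \<Lambda> k $ i) * mat_adjoint U)
     \<and> (\<forall>a<m. \<forall>i. eigenvector (x i) (col U a) (complex_of_real (\<Lambda> a $ i)))"
proof -
  have comm: "x i * x j = x j * x i" for i j using ab unfolding abelian_tuple_def by auto
  have xc: "x i \<in> carrier_mat m m" for i using sa unfolding self_adjoint_def by auto
  have xs: "mat_adjoint (x i) = x i" for i using sa unfolding self_adjoint_def by auto
  obtain vs where len: "length vs = m" and on: "onl m vs"
    and ev: "\<forall>a<m. \<forall>i. \<exists>\<mu>. x i *\<^sub>v vs!a = \<mu> \<cdot>\<^sub>v vs!a"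
  proof -
    have "\<exists>vs. length vs = m \<and> onl m vs \<and> (\<forall>a<m. \<forall>i. \<exists>\<mu>. x i *\<^sub>v vs!a = \<mu> \<cdot>\<^sub>v vs!a)"
      by (rule grow[where x=x and m=m and k=m]) (use sa comm in auto)
    thus ?thesis using that by blast
  qed
  have vc: "vs ! a \<in> carrier_vec m" if "a < m" for a using on that len unfolding onl_def by auto
  have ip: "scalar_prod (conjugate (vs!a)) (vs!b) = (if a = b then 1 else 0)" if "a < m" "b < m" for a b
    using on that len unfolding onl_def by auto
  define mu where "mu i a = (SOME \<mu>. x i *\<^sub>v vs!a = \<mu> \<cdot>\<^sub>v vs!a)" for i a
  have mu_ev: "x i *\<^sub>v vs!a = mu i a \<cdot>\<^sub>v vs!a" if a: "a < m" for i a
    unfolding mu_def using ev a by (metis (mono_tags, lifting) someI_ex)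
  have mu_val: "mu i a = scalar_prod (conjugate (vs!a)) (x i *\<^sub>v vs!a)" if a: "a < m" for i a
  proof -
    have "scalar_prod (conjugate (vs!a)) (x i *\<^sub>v vs!a) = mu i a * scalar_prod (conjugate (vs!a)) (vs!a)"
      unfolding mu_ev[OF a] by (rule scalar_prod_smult_distrib[OF carrier_vec_conjugate[OF vc[OF a]] vc[OF a]])
    thus ?thesis using ip[OF a a] by simp
  qed
  have mu_real: "complex_of_real (Re (mu i a)) = mu i a" if a: "a < m" for i a
  proof (rule cnj_real)
    have "scalar_prod (conjugate (vs!a)) (x i *\<^sub>v vs!a) = scalar_prod (conjugate (x i *\<^sub>v vs!a)) (vs!a)"
      by (rule herm_swap[OF xc xs vc[OF a] vc[OF a]])
    also have "\<dots> = cnj (scalar_prod (conjugate (vs!a)) (x i *\<^sub>v vs!a))"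
      by (rule inner_sym[OF mult_mat_vec_carrier[OF xc vc[OF a]] vc[OF a]])
    finally show "cnj (mu i a) = mu i a" unfolding mu_val[OF a] by simp
  qed
  define \<Lambda> :: "nat \<Rightarrow> real^'n" where "\<Lambda> a = (\<chi> i. Re (mu i a))" for a
  have La: "\<Lambda> a $ i = Re (mu i a)" for a i unfolding \<Lambda>_def by simp
  define U where "U = mat_of_cols m vs"
  have Uc: "U \<in> carrier_mat m m" unfolding U_def using len by (metis mat_of_cols_carrier(1))
  have colU: "col U a = vs ! a" if "a < m" for a unfolding U_def using that len vc by simp
  have Uent: "U $$ (r,a) = vs ! a $ r" if "r < m" "a < m" for r a
  proof -
    have "U $$ (r,a) = col U a $ r" using Uc that by simp
    thus ?thesis using colU that by simp
  qed
  have UtU: "mat_adjoint U * U = 1\<^sub>m m"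
  proof (rule eq_matI)
    fix a b assume "a < dim_row (1\<^sub>m m :: complex mat)" "b < dim_col (1\<^sub>m m :: complex mat)"
    hence a: "a < m" and b: "b < m" by auto
    have "(mat_adjoint U * U) $$ (a,b) = (\<Sum>r<m. mat_adjoint U $$ (a,r) * U $$ (r,b))"
      by (rule mult_entry[OF adj_carrier[OF Uc] Uc a b])
    also have "\<dots> = (\<Sum>r<m. conjugate (vs!a) $ r * vs!b $ r)"
      using Uc a b vc[OF a] by (intro sum.cong refl) (simp add: Uent conjugate_complex_def)
    also have "\<dots> = scalar_prod (conjugate (vs!a)) (vs!b)"
      unfolding scalar_prod_def using vc[OF b] by (simp add: atLeast0LessThan)
    also have "\<dots> = (1\<^sub>m m :: complex mat) $$ (a,b)" using ip[OF a b] a b by simp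
    finally show "(mat_adjoint U * U) $$ (a,b) = (1\<^sub>m m :: complex mat) $$ (a,b)" .
  qed (use Uc in auto)
  have UUt: "U * mat_adjoint U = 1\<^sub>m m" by (rule mat_mult_left_right_inverse[OF adj_carrier[OF Uc] Uc UtU])
  have Uu: "unitary_mat m U" unfolding unitary_mat_def using Uc UtU UUt by simp
  have xU: "x i * U = U * real_diag_mat m (\<lambda>k. \<Lambda> k $ i)" for i
  proof (rule eq_matI)
    fix r a assume "r < dim_row (U * real_diag_mat m (\<lambda>k. \<Lambda> k $ i))" "a < dim_col (U * real_diag_mat m (\<lambda>k. \<Lambda> k $ i))"
    hence r: "r < m" and a: "a < m" using Uc by auto
    have "(x i * U) $$ (r,a) = (x i *\<^sub>v col U a) $ r" using xc[of i] Uc r a by simp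
    also have "\<dots> = mu i a * vs ! a $ r" unfolding colU[OF a] mu_ev[OF a] using vc[OF a] r by simp
    also have "\<dots> = (U * real_diag_mat m (\<lambda>k. \<Lambda> k $ i)) $$ (r,a)"
      unfolding mult_rdiag_right[OF Uc r a] La Uent[OF r a] mu_real[OF a] by simp
    finally show "(x i * U) $$ (r,a) = (U * real_diag_mat m (\<lambda>k. \<Lambda> k $ i)) $$ (r,a)" .
  qed (use xc Uc in auto)
  have xd: "x i = U * real_diag_mat m (\<lambda>k. \<Lambda> k $ i) * mat_adjoint U" for i
  proof -
    have "x i = x i * (U * mat_adjoint U)" using UUt xc[of i] by simp
    also have "\<dots> = x i * U * mat_adjoint U" using assoc_mult_mat[OF xc Uc adj_carrier[OF Uc]] by simp
    finally show ?thesis unfolding xU .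
  qed
  have eig: "eigenvector (x i) (col U a) (complex_of_real (\<Lambda> a $ i))" if a: "a < m" for a i
  proof -
    have nz: "vs ! a \<noteq> 0\<^sub>v m"
    proof
      assume "vs ! a = 0\<^sub>v m"
      hence "scalar_prod (conjugate (vs!a)) (vs!a) = 0" by (simp add: ip_zero)
      with ip[OF a a] show False by simp
    qed
    show ?thesis unfolding eigenvector_def colU[OF a] La mu_real[OF a] mu_ev[OF a, symmetric]
      using vc[OF a] nz xc[of i] by simp
  qed
  show ?thesis using Uu xd eig by blast
qed



lemma sum_list_mset_eq: "mset xs = mset ys \<Longrightarrow> sum_list (map g xs) = sum_list (map (g::'a \<Rightarrow> real) ys)"
  by (metis mset_map sum_mset_sum_list)

lemma sum_lessThan_list: "(\<Sum>i<m. h i) = sum_list (map (h::nat \<Rightarrow> real) [0..<m])"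
  by (simp add: sum_list_distinct_conv_sum_set atLeast0LessThan)

lemma L2:
  fixes b w :: "nat \<Rightarrow> real"
  assumes w0: "\<And>l. l < m \<Longrightarrow> 0 \<le> w l" and w1: "\<And>l. l < m \<Longrightarrow> w l \<le> 1"
    and ws: "(\<Sum>l<m. w l) = real K" and K: "K \<le> m"
  shows "(\<Sum>l<m. w l * b l) \<le> (\<Sum>i<K. rev (sort (map b [0..<m])) ! i)"
proof (cases "K = 0")
  case True
  then have "\<forall>l\<in>{..<m}. w l = 0" using ws w0 sum_nonneg_eq_0_iff[of "{..<m}" w] by auto
  then show ?thesis using True by simp
next
  case False
  define ys where "ys = rev (sort (map b [0..<m]))"
  have ly: "length ys = m" by (simp add: ys_def)
  have mono: "ys ! j \<le> ys ! i" if "i \<le> j" "j < m" for i j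
  proof -
    have s: "sorted (sort (map b [0..<m]))" by simp
    have "ys ! i = sort (map b [0..<m]) ! (m - Suc i)" "ys ! j = sort (map b [0..<m]) ! (m - Suc j)"
      unfolding ys_def using that by (simp_all add: rev_nth)
    moreover have "sort (map b [0..<m]) ! (m - Suc j) \<le> sort (map b [0..<m]) ! (m - Suc i)"
      by (rule sorted_nth_mono[OF s]) (use that in auto)
    ultimately show ?thesis by simp
  qed
  define c where "c = ys ! (K - 1)"
  define g where "g t = max (t - c) 0" for t :: real
  have perm: "(\<Sum>l<m. g (b l)) = (\<Sum>i<m. g (ys ! i))"
  proof -
    have "(\<Sum>l<m. g (b l)) = sum_list (map g (map b [0..<m]))"
      unfolding sum_lessThan_list by (simp add: o_def)
    also have "\<dots> = sum_list (map g ys)" by (rule sum_list_mset_eq) (simp add: ys_def)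
    also have "ys = map (\<lambda>i. ys ! i) [0..<m]" using map_nth[of ys] ly by simp
    also have "sum_list (map g (map (\<lambda>i. ys ! i) [0..<m])) = (\<Sum>i<m. g (ys ! i))"
      unfolding sum_lessThan_list by (simp add: o_def)
    finally show ?thesis .
  qed
  have split: "(\<Sum>i<m. g (ys ! i)) = (\<Sum>i<K. ys ! i - c)"
  proof -
    have un: "{..<m} = {..<K} \<union> {K..<m}" using K by auto
    have "(\<Sum>i<m. g (ys ! i)) = (\<Sum>i<K. g (ys ! i)) + (\<Sum>i\<in>{K..<m}. g (ys ! i))"
      unfolding un by (rule sum.union_disjoint) auto
    also have "(\<Sum>i\<in>{K..<m}. g (ys ! i)) = 0"
    proof (rule sum.neutral, rule ballI)
      fix i assume i: "i \<in> {K..<m}"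
      have "ys ! i \<le> c" unfolding c_def by (rule mono) (use i False in auto)
      thus "g (ys ! i) = 0" unfolding g_def by simp
    qed
    also have "(\<Sum>i<K. g (ys ! i)) = (\<Sum>i<K. ys ! i - c)"
    proof (rule sum.cong[OF refl])
      fix i assume i: "i \<in> {..<K}"
      have "c \<le> ys ! i" unfolding c_def by (rule mono) (use i False K in auto)
      thus "g (ys ! i) = ys ! i - c" unfolding g_def by simp
    qed
    finally show ?thesis by simp
  qed
  have pt: "w l * b l \<le> w l * c + g (b l)" if l: "l < m" for l
  proof (cases "b l \<ge> c")
    case True
    have "w l * (b l - c) \<le> 1 * (b l - c)" by (rule mult_right_mono) (use w1[OF l] True in auto)
    thus ?thesis unfolding g_def using True by (simp add: algebra_simps)
  next
    case False
    have "w l * (b l - c) \<le> 0" by (rule mult_nonneg_nonpos) (use w0[OF l] False in auto)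
    thus ?thesis unfolding g_def using False by (simp add: algebra_simps)
  qed
  have "(\<Sum>l<m. w l * b l) \<le> (\<Sum>l<m. w l * c + g (b l))" by (rule sum_mono) (use pt in auto)
  also have "\<dots> = real K * c + (\<Sum>l<m. g (b l))" by (simp add: sum.distrib sum_distrib_right[symmetric] ws)
  also have "\<dots> = real K * c + (\<Sum>i<K. ys ! i - c)" unfolding perm split ..
  also have "\<dots> = (\<Sum>i<K. ys ! i)" by (simp add: sum_subtractf)
  finally show ?thesis unfolding ys_def .
qed

lemma L1:
  fixes a :: "nat \<Rightarrow> real"
  assumes K: "K \<le> m"
  shows "\<exists>S \<subseteq> {..<m}. card S = K \<and> (\<Sum>i<K. rev (sort (map a [0..<m])) ! i) = (\<Sum>k\<in>S. a k)"
proof -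
  have "mset (rev (sort (map a [0..<m]))) = mset (map a [0..<m])" by simp
  then obtain p where p: "p permutes {..<length (map a [0..<m])}"
    "permute_list p (map a [0..<m]) = rev (sort (map a [0..<m]))"
    by (rule mset_eq_permutation)
  have pm: "p permutes {..<m}" using p(1) by simp
  have pin: "p i < m" if "i < m" for i using permutes_in_image[OF pm] that by simp
  have nth: "rev (sort (map a [0..<m])) ! i = a (p i)" if i: "i < m" for i
  proof -
    have "rev (sort (map a [0..<m])) ! i = permute_list p (map a [0..<m]) ! i" using p(2) by simp
    also have "\<dots> = map a [0..<m] ! p i" by (rule permute_list_nth) (use p(1) i in auto)
    also have "\<dots> = a (p i)" using pin[OF i] by simp
    finally show ?thesis .
  qed
  have inj: "inj_on p {..<K}" using permutes_inj[OF pm] by (simp add: inj_on_def inj_def)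
  show ?thesis
  proof (intro exI[of _ "p ` {..<K}"] conjI)
    show "p ` {..<K} \<subseteq> {..<m}" using pin K by auto
    show "card (p ` {..<K}) = K" using card_image[OF inj] by simp
    have "(\<Sum>k\<in>p ` {..<K}. a k) = (\<Sum>i<K. a (p i))" using sum.reindex[OF inj, of a] by simp
    also have "\<dots> = (\<Sum>i<K. rev (sort (map a [0..<m])) ! i)" using nth K by (intro sum.cong refl) auto
    finally show "(\<Sum>i<K. rev (sort (map a [0..<m])) ! i) = (\<Sum>k\<in>p ` {..<K}. a k)" by simp
  qed
qed

lemma maj:
  fixes a b :: "nat \<Rightarrow> real" and P :: "nat \<Rightarrow> nat \<Rightarrow> real"
  assumes P0: "\<And>l k. l < m \<Longrightarrow> k < m \<Longrightarrow> 0 \<le> P l k"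
    and col: "\<And>k. k < m \<Longrightarrow> (\<Sum>l<m. P l k) = 1"
    and row: "\<And>l. l < m \<Longrightarrow> (\<Sum>k<m. P l k) = 1"
    and ak: "\<And>k. k < m \<Longrightarrow> a k \<le> (\<Sum>l<m. P l k * b l)"
    and K: "K \<le> m"
  shows "(\<Sum>i<K. rev (sort (map a [0..<m])) ! i) \<le> (\<Sum>i<K. rev (sort (map b [0..<m])) ! i)"
proof -
  obtain S where S: "S \<subseteq> {..<m}" "card S = K" "(\<Sum>i<K. rev (sort (map a [0..<m])) ! i) = (\<Sum>k\<in>S. a k)"
    using L1[OF K, of a] by blast
  have fS: "finite S" using S(1) finite_subset by blast
  define w where "w l = (\<Sum>k\<in>S. P l k)" for l
  have "(\<Sum>k\<in>S. a k) \<le> (\<Sum>k\<in>S. \<Sum>l<m. P l k * b l)" by (rule sum_mono) (use ak S(1) in auto)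
  also have "\<dots> = (\<Sum>l<m. \<Sum>k\<in>S. P l k * b l)" by (rule sum.swap)
  also have "\<dots> = (\<Sum>l<m. w l * b l)" unfolding w_def by (simp add: sum_distrib_right)
  also have "\<dots> \<le> (\<Sum>i<K. rev (sort (map b [0..<m])) ! i)"
  proof (rule L2[OF _ _ _ K])
    fix l assume l: "l < m"
    show "0 \<le> w l" unfolding w_def using P0 l S(1) by (intro sum_nonneg) auto
    have "w l \<le> (\<Sum>k<m. P l k)" unfolding w_def by (rule sum_mono2) (use S(1) P0 l in auto)
    thus "w l \<le> 1" using row[OF l] by simp
  next
    have "(\<Sum>l<m. w l) = (\<Sum>k\<in>S. \<Sum>l<m. P l k)" unfolding w_def by (rule sum.swap)
    also have "\<dots> = (\<Sum>k\<in>S. 1)" using col S(1) by (intro sum.cong refl) auto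
    finally show "(\<Sum>l<m. w l) = real K" using S(2) by simp
  qed
  finally show ?thesis using S(3) by simp
qed



lemma mono_D:
  fixes f :: "real^'n::finite \<Rightarrow> real" and I :: "'n \<Rightarrow> real set" and v w :: "real^'n"
  assumes incr: "sep_increasing_on {v. \<forall>i. v $ i \<in> I i} f"
    and v: "\<forall>i. v $ i \<in> I i" and w: "\<forall>i. w $ i \<in> I i" and le: "\<forall>i. v $ i \<le> w $ i"
  shows "f v \<le> f w"
proof -
  define u :: "'n set \<Rightarrow> real^'n" where "u J = (\<chi> i. if i \<in> J then w $ i else v $ i)" for J
  have uD: "u J \<in> {v. \<forall>i. v $ i \<in> I i}" for J unfolding u_def using v w by simp
  have fin: "finite J \<Longrightarrow> f v \<le> f (u J)" for J
  proof (induction J rule: finite_induct)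
    case empty
    have "u {} = v" unfolding u_def by (simp add: Finite_Cartesian_Product.vec_eq_iff)
    then show ?case by simp
  next
    case (insert j J)
    have "(\<forall>j'. j' \<noteq> j \<longrightarrow> u J $ j' = u (insert j J) $ j') \<and> u J $ j \<le> u (insert j J) $ j"
      unfolding u_def using insert.hyps(2) le by simp
    hence "f (u J) \<le> f (u (insert j J))"
      using incr uD[of J] uD[of "insert j J"] unfolding sep_increasing_on_def by blast
    then show ?case using insert.IH by linarith
  qed
  have "u UNIV = w" unfolding u_def by (simp add: Finite_Cartesian_Product.vec_eq_iff)
  thus ?thesis using fin[of UNIV] by simp
qed

theorem mainTheorem8:
  fixes I :: "'n::finite \<Rightarrow> real set"
    and f :: "real ^ 'n \<Rightarrow> real"
    and m :: nat
    and x y :: "'n \<Rightarrow> complex mat"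
  assumes intervals: "\<And>i. is_interval (I i)"
    and convex: "convex_on {v. \<forall>i. v $ i \<in> I i} f"
    and incr: "sep_increasing_on {v. \<forall>i. v $ i \<in> I i} f"
    and sa_x: "\<And>i. self_adjoint m (x i)"
    and sa_y: "\<And>i. self_adjoint m (y i)"
    and ab_x: "abelian_tuple x"
    and ab_y: "abelian_tuple y"
    and spec_x: "\<And>i. spectrum (x i) \<subseteq> complex_of_real ` I i"
    and spec_y: "\<And>i. spectrum (y i) \<subseteq> complex_of_real ` I i"
    and le: "\<And>i. loewner_le m (x i) (y i)"
  shows "weak_majorized m (joint_fc m f x) (joint_fc m f y)"
proof (cases "m = 0")
  case True
  then show ?thesis unfolding weak_majorized_def by simp
next
  case False
  let ?D = "{v. \<forall>i. v $ i \<in> I i}"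
  have xc: "x i \<in> carrier_mat m m" for i using sa_x unfolding self_adjoint_def by auto
  have yc: "y i \<in> carrier_mat m m" for i using sa_y unfolding self_adjoint_def by auto
  obtain U and \<Lambda> :: "nat \<Rightarrow> real^'n" where U: "unitary_mat m U"
    and xU: "\<forall>i. x i = U * real_diag_mat m (\<lambda>k. \<Lambda> k $ i) * mat_adjoint U"
    and xe: "\<forall>a<m. \<forall>i. eigenvector (x i) (col U a) (complex_of_real (\<Lambda> a $ i))"
  proof -
    have "\<exists>U (\<Lambda>::nat \<Rightarrow> real^'n). unitary_mat m U \<and> (\<forall>i. x i = U * real_diag_mat m (\<lambda>k. \<Lambda> k $ i) * mat_adjoint U)
     \<and> (\<forall>a<m. \<forall>i. eigenvector (x i) (col U a) (complex_of_real (\<Lambda> a $ i)))"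
      by (rule SD[where x=x and m=m]) (use sa_x ab_x in auto)
    thus ?thesis using that by blast
  qed
  obtain V and \<Gamma> :: "nat \<Rightarrow> real^'n" where V: "unitary_mat m V"
    and yV: "\<forall>i. y i = V * real_diag_mat m (\<lambda>k. \<Gamma> k $ i) * mat_adjoint V"
    and ye: "\<forall>a<m. \<forall>i. eigenvector (y i) (col V a) (complex_of_real (\<Gamma> a $ i))"
  proof -
    have "\<exists>U (\<Lambda>::nat \<Rightarrow> real^'n). unitary_mat m U \<and> (\<forall>i. y i = U * real_diag_mat m (\<lambda>k. \<Lambda> k $ i) * mat_adjoint U)
     \<and> (\<forall>a<m. \<forall>i. eigenvector (y i) (col U a) (complex_of_real (\<Lambda> a $ i)))"
      by (rule SD[where x=y and m=m]) (use sa_y ab_y in auto)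
    thus ?thesis using that by blast
  qed
  note u = unitaryD[OF U] and v = unitaryD[OF V]
  have jx: "joint_fc m f x = U * real_diag_mat m (\<lambda>k. f (\<Lambda> k)) * mat_adjoint U"
    by (rule joint_fc_char[OF U]) (use xU in auto)
  have jy: "joint_fc m f y = V * real_diag_mat m (\<lambda>k. f (\<Gamma> k)) * mat_adjoint V"
    by (rule joint_fc_char[OF V]) (use yV in auto)
  have ex: "eigs_desc (joint_fc m f x) = rev (sort (map (\<lambda>k. f (\<Lambda> k)) [0..<m]))"
    unfolding jx by (rule eigs_diag[OF U])
  have ey: "eigs_desc (joint_fc m f y) = rev (sort (map (\<lambda>k. f (\<Gamma> k)) [0..<m]))"
    unfolding jy by (rule eigs_diag[OF V])
  have LD: "\<Lambda> a \<in> ?D" if a: "a < m" for a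
  proof -
    have "\<Lambda> a $ i \<in> I i" for i
    proof -
      have "complex_of_real (\<Lambda> a $ i) \<in> spectrum (x i)"
        unfolding spectrum_def eigenvalue_def using xe a by auto
      then obtain r where "r \<in> I i" "complex_of_real (\<Lambda> a $ i) = complex_of_real r"
        using spec_x[of i] by auto
      thus ?thesis by simp
    qed
    thus ?thesis by simp
  qed
  have GD: "\<Gamma> a \<in> ?D" if a: "a < m" for a
  proof -
    have "\<Gamma> a $ i \<in> I i" for i
    proof -
      have "complex_of_real (\<Gamma> a $ i) \<in> spectrum (y i)"
        unfolding spectrum_def eigenvalue_def using ye a by auto
      then obtain r where "r \<in> I i" "complex_of_real (\<Gamma> a $ i) = complex_of_real r"
        using spec_y[of i] by auto
      thus ?thesis by simp
    qed
    thus ?thesis by simp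
  qed
  define W where "W = mat_adjoint V * U"
  have Wu: "unitary_mat m W" unfolding W_def by (rule unitary_prod[OF V U])
  note w = unitaryD[OF Wu]
  define P where "P l k = (cmod (W $$ (l,k)))\<^sup>2" for l k
  have P0: "0 \<le> P l k" for l k unfolding P_def by simp
  have colP: "(\<Sum>l<m. P l k) = 1" if "k < m" for k unfolding P_def by (rule unitary_colsum[OF Wu that])
  have rowP: "(\<Sum>k<m. P l k) = 1" if "l < m" for l unfolding P_def by (rule unitary_rowsum[OF Wu that])
  have lw: "\<Lambda> k $ i \<le> (\<Sum>l<m. P l k * \<Gamma> l $ i)" if k: "k < m" for k i
  proof -
    let ?Di = "real_diag_mat m (\<lambda>k. \<Lambda> k $ i)" and ?Ei = "real_diag_mat m (\<lambda>k. \<Gamma> k $ i)"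
    have ck: "col U k \<in> carrier_vec m" using u(1) k by (simp add: col_def)
    have "0 \<le> Re (scalar_prod (conjugate (col U k)) ((y i - x i) *\<^sub>v col U k))"
      using le[of i] ck unfolding loewner_le_def by blast
    also have "scalar_prod (conjugate (col U k)) ((y i - x i) *\<^sub>v col U k) = (mat_adjoint U * (y i - x i) * U) $$ (k,k)"
      by (rule Q1[OF minus_carrier_mat[OF xc] u(1) k])
    also have "mat_adjoint U * (y i - x i) = mat_adjoint U * y i - mat_adjoint U * x i"
      by (rule mult_minus_distrib_mat[OF u(2) yc xc])
    also have "(mat_adjoint U * y i - mat_adjoint U * x i) * U = mat_adjoint U * y i * U - mat_adjoint U * x i * U"
      by (rule minus_mult_distrib_mat[OF mult_carrier_mat[OF u(2) yc] mult_carrier_mat[OF u(2) xc] u(1)])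
    also have "(mat_adjoint U * y i * U - mat_adjoint U * x i * U) $$ (k,k) = (mat_adjoint U * y i * U) $$ (k,k) - (mat_adjoint U * x i * U) $$ (k,k)"
      using u xc[of i] k by simp
    also have "mat_adjoint U * y i * U = mat_adjoint W * ?Ei * W"
      unfolding W_def using yV conj_diag2[OF U V] by metis
    also have "mat_adjoint U * x i * U = ?Di"
      using xU conj_diag[OF U] by metis
    also have "(mat_adjoint W * ?Ei * W) $$ (k,k) = complex_of_real (\<Sum>l<m. P l k * \<Gamma> l $ i)"
      unfolding P_def by (rule Q2[OF w(1) k])
    finally show ?thesis using k by simp
  qed
  have cD: "convex ?D" using convex unfolding convex_on_def by simp
  have ak: "f (\<Lambda> k) \<le> (\<Sum>l<m. P l k * f (\<Gamma> l))" if k: "k < m" for k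
  proof -
    define z where "z = (\<Sum>l<m. P l k *\<^sub>R \<Gamma> l)"
    have zD: "z \<in> ?D" unfolding z_def
      by (rule convex_sum[OF _ cD colP[OF k]]) (use P0 GD in auto)
    have zi: "z $ i = (\<Sum>l<m. P l k * \<Gamma> l $ i)" for i unfolding z_def by simp
    have "f (\<Lambda> k) \<le> f z"
      by (rule mono_D[OF incr]) (use LD[OF k] zD lw[OF k] zi in auto)
    also have "f z \<le> (\<Sum>l<m. P l k * f (\<Gamma> l))" unfolding z_def
      by (rule convex_on_sum[OF _ _ convex colP[OF k]]) (use P0 GD False in auto)
    finally show ?thesis .
  qed
  show ?thesis unfolding weak_majorized_def ex ey
  proof
    fix K assume "K \<in> {1..m}"
    hence K: "K \<le> m" by simp
    show "(\<Sum>i<K. rev (sort (map (\<lambda>k. f (\<Lambda> k)) [0..<m])) ! i) \<le> (\<Sum>i<K. rev (sort (map (\<lambda>k. f (\<Gamma> k)) [0..<m])) ! i)"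
      by (rule maj[OF _ colP rowP ak K]) (use P0 in auto)
  qed
qed

end
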